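(* Let $J$ be a smooth almost complex structure defined on a neighborhood $U$ of the origin in $\mathbb{C}^n$, with coordinates $Z=(w,z)$, $w\in\mathbb{C}$, $z=(z_2,\dots,z_n)\in\mathbb{C}^{n-1}$, such that $J(0)=J_{st}$ and the map $\zeta\mapsto(\zeta,0,\dots,0)$ is $J$-holomorphic (on the set of $\zeta$ with $(\zeta,0,\dots,0)\in U$). For $\delta>0$ let $\Lambda_\delta(w,z) = (\delta^{-1/2}w, \delta^{-1}z)$ and let $J_\delta := (\Lambda_\delta)_*(J) = d\Lambda_\delta\circ J\circ (d\Lambda_\delta)^{-1}$, an almost complex structure on $\Lambda_\delta(U)$. Then for every $k>0$ and every compact set $K\subset\mathbb{C}^n$ we have $\|J_\delta - J_{st}\|_{C^k(K)} \to 0$ as $\delta\to 0$.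
   Context: $J_{st}$ is the standard complex structure of $\mathbb{C}^n$; almost complex structures on domains of $\mathbb{C}^n\cong\mathbb{R}^{2n}$ are viewed as smooth real $2n\times 2n$ matrix-valued functions. A smooth map $f$ from a domain of $\mathbb{C}$ to $U$ is $J$-holomorphic if $df\circ J_{st} = J\circ df$. For a compact $K$, $J_\delta$ is defined on $K$ for all sufficiently small $\delta$. *)

theory Defs
  imports "HOL-Analysis.Analysis"
begin

text \<open>Points of C^n are vectors complex^'n (n = CARD('n)), viewed as the real
  vector space R^{2n}.  A (pointwise) real-linear endomorphism field
  J :: complex^'n => complex^'n => complex^'n is an almost complex structure;
  its real matrix entries w.r.t. the orthonormal real basis are given below.\<close>

type_synonym 'n cvec = "complex ^ 'n"

definition Jst :: "'n::finite cvec \<Rightarrow> 'n cvec" where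
  "Jst v = (\<chi> j. \<i> * v $ j)"

definition mat_entry :: "('a::real_inner \<Rightarrow> 'a) \<Rightarrow> 'a \<Rightarrow> 'a \<Rightarrow> real" where
  "mat_entry A b c = A b \<bullet> c"

definition partial :: "'a::real_normed_vector \<Rightarrow> ('a \<Rightarrow> real) \<Rightarrow> 'a \<Rightarrow> real" where
  "partial b f x = frechet_derivative f (at x) b"

fun iter_partial :: "'a::real_normed_vector list \<Rightarrow> ('a \<Rightarrow> real) \<Rightarrow> 'a \<Rightarrow> real" where
  "iter_partial [] f = f"
| "iter_partial (b # bs) f = partial b (iter_partial bs f)"

definition smooth_on :: "'a::euclidean_space set \<Rightarrow> ('a \<Rightarrow> real) \<Rightarrow> bool" where
  "smooth_on U f \<longleftrightarrow> (\<forall>bs\<in>lists Basis. \<forall>x\<in>U. iter_partial bs f differentiable (at x))"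

definition almost_complex_on :: "'a::euclidean_space set \<Rightarrow> ('a \<Rightarrow> 'a \<Rightarrow> 'a) \<Rightarrow> bool" where
  "almost_complex_on U J \<longleftrightarrow>
     (\<forall>p\<in>U. linear (J p) \<and> (\<forall>v. J p (J p v) = - v)) \<and>
     (\<forall>b\<in>Basis. \<forall>c\<in>Basis. smooth_on U (\<lambda>p. mat_entry (J p) b c))"

definition J_holomorphic_on :: "complex set \<Rightarrow> ('a::real_normed_vector \<Rightarrow> 'a \<Rightarrow> 'a) \<Rightarrow> (complex \<Rightarrow> 'a) \<Rightarrow> bool" where
  "J_holomorphic_on D J f \<longleftrightarrow>
     (\<forall>\<zeta>\<in>D. f differentiable (at \<zeta>) \<and>
        (\<forall>h. frechet_derivative f (at \<zeta>) (\<i> * h) = J (f \<zeta>) (frechet_derivative f (at \<zeta>) h)))"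

text \<open>The distinguished coordinate i0 plays the role of w; the others are z.\<close>
definition Lam :: "'n::finite \<Rightarrow> real \<Rightarrow> 'n cvec \<Rightarrow> 'n cvec" where
  "Lam i0 \<delta> v = (\<chi> j. if j = i0 then complex_of_real (\<delta> powr (-1/2)) * v $ j
                          else complex_of_real (1/\<delta>) * v $ j)"

definition Lam_inv :: "'n::finite \<Rightarrow> real \<Rightarrow> 'n cvec \<Rightarrow> 'n cvec" where
  "Lam_inv i0 \<delta> v = (\<chi> j. if j = i0 then complex_of_real (sqrt \<delta>) * v $ j
                          else complex_of_real \<delta> * v $ j)"

text \<open>J_delta = (Lam_delta)_* J = dLam \<circ> J \<circ> (dLam)^{-1}; Lam is linear.\<close>
definition Jdelta :: "'n::finite \<Rightarrow> ('n cvec \<Rightarrow> 'n cvec \<Rightarrow> 'n cvec) \<Rightarrow> real \<Rightarrow> 'n cvec \<Rightarrow> 'n cvec \<Rightarrow> 'n cvec" where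
  "Jdelta i0 J \<delta> p v = Lam i0 \<delta> (J (Lam_inv i0 \<delta> p) (Lam_inv i0 \<delta> v))"

definition axis_emb :: "'n::finite \<Rightarrow> complex \<Rightarrow> 'n cvec" where
  "axis_emb i0 \<zeta> = (\<chi> j. if j = i0 then \<zeta> else 0)"

end

theory Submission
  imports Defs
begin

lemma fd_local:
  assumes "open S" "x \<in> S" "\<And>y. y \<in> S \<Longrightarrow> f y = g y"
  shows "frechet_derivative f (at x) = frechet_derivative g (at x)"
proof -
  have "\<And>D. (f has_derivative D) (at x) \<longleftrightarrow> (g has_derivative D) (at x)"
    using assms by (metis has_derivative_transform_within_open)
  then show ?thesis unfolding frechet_derivative_def by simp
qed

lemma ip_local:
  assumes "open S" "x \<in> S" "\<And>y. y \<in> S \<Longrightarrow> f y = g y"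
  shows "iter_partial bs f x = iter_partial bs g x"
  using assms(2)
proof (induction bs arbitrary: x)
  case Nil
  then show ?case using assms by simp
next
  case (Cons b bs)
  have "frechet_derivative (iter_partial bs f) (at x) = frechet_derivative (iter_partial bs g) (at x)"
    by (rule fd_local[OF assms(1) Cons.prems]) (rule Cons.IH)
  then show ?case by (simp add: partial_def)
qed

lemma ip_chain:
  fixes L :: "'a::euclidean_space \<Rightarrow> 'a"
  assumes lin: "linear L" and Lb: "\<And>b. b\<in>Basis \<Longrightarrow> L b = s b *\<^sub>R b" and V: "open V"
    and sm: "\<And>bs y. bs\<in>lists Basis \<Longrightarrow> y\<in>V \<Longrightarrow> iter_partial bs F differentiable at y"
  shows "bs \<in> lists Basis \<Longrightarrow> L p \<in> V \<Longrightarrow> iter_partial bs (\<lambda>q. a * F (L q) - k) p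
     = a * prod_list (map s bs) * iter_partial bs F (L p) - (if bs = [] then k else 0)"
proof (induction bs arbitrary: p)
  case Nil
  then show ?case by simp
next
  case (Cons b bs)
  let ?O = "L -` V"
  have bl: "bounded_linear L" using lin by (simp add: linear_conv_bounded_linear)
  have cont: "continuous_on UNIV L" using bl linear_continuous_on by blast
  have oO: "open ?O" using open_vimage[OF V cont] by simp
  let ?H = "iter_partial bs F"
  let ?c = "a * prod_list (map s bs)"
  let ?k = "(if bs = [] then k else 0)"
  have eq: "\<And>q. q \<in> ?O \<Longrightarrow> iter_partial bs (\<lambda>q. a * F (L q) - k) q = ?c * ?H (L q) - ?k"
    using Cons by auto
  have Hd: "(?H has_derivative frechet_derivative ?H (at (L p))) (at (L p))"
    using sm Cons.prems frechet_derivative_works by auto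
  have "((\<lambda>q. ?c * ?H (L q) - ?k) has_derivative (\<lambda>h. ?c * frechet_derivative ?H (at (L p)) (L h) - 0)) (at p)"
  proof -
    have Ld: "(L has_derivative L) (at p)" using bl bounded_linear_imp_has_derivative by blast
    have "((\<lambda>q. ?H (L q)) has_derivative (\<lambda>h. frechet_derivative ?H (at (L p)) (L h))) (at p)"
      using diff_chain_at[of L L p ?H, OF Ld Hd] by (simp add: o_def)
    then show ?thesis by (intro derivative_intros)
  qed
  then have fd: "frechet_derivative (\<lambda>q. ?c * ?H (L q) - ?k) (at p) = (\<lambda>h. ?c * frechet_derivative ?H (at (L p)) (L h) - 0)"
    using frechet_derivative_at by metis
  have lH: "linear (frechet_derivative ?H (at (L p)))"
    using Hd has_derivative_linear by blast
  have "iter_partial (b # bs) (\<lambda>q. a * F (L q) - k) p = frechet_derivative (\<lambda>q. ?c * ?H (L q) - ?k) (at p) b"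
    using fd_local[OF oO _ eq, of p] Cons.prems by (simp add: partial_def)
  also have "\<dots> = ?c * s b * frechet_derivative ?H (at (L p)) b"
    using fd Lb Cons.prems lH by (simp add: linear_scale)
  also have "\<dots> = a * prod_list (map s (b # bs)) * iter_partial (b # bs) F (L p) - (if b # bs = [] then k else 0)"
    by (simp add: partial_def)
  finally show ?case .
qed

lemma lin_bound:
  fixes D :: "'a::euclidean_space \<Rightarrow> real"
  assumes "linear D" "\<And>e. e \<in> Basis \<Longrightarrow> \<bar>D e\<bar> \<le> M"
  shows "\<bar>D v\<bar> \<le> real DIM('a) * M * norm v"
proof -
  have "D v = (\<Sum>e\<in>Basis. (v \<bullet> e) * D e)"
  proof -
    have "D v = D (\<Sum>e\<in>Basis. (v \<bullet> e) *\<^sub>R e)" by (simp add: euclidean_representation)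
    also have "\<dots> = (\<Sum>e\<in>Basis. (v \<bullet> e) * D e)"
      using assms(1) by (simp add: linear_sum linear_scale)
    finally show ?thesis .
  qed
  then have "\<bar>D v\<bar> \<le> (\<Sum>e\<in>Basis. \<bar>(v \<bullet> e) * D e\<bar>)" by (simp add: sum_abs)
  also have "\<dots> \<le> (\<Sum>e\<in>(Basis::'a set). norm v * M)"
  proof (rule sum_mono)
    fix e :: 'a assume e: "e \<in> Basis"
    have "\<bar>(v \<bullet> e) * D e\<bar> = \<bar>v \<bullet> e\<bar> * \<bar>D e\<bar>" by (simp add: abs_mult)
    also have "\<dots> \<le> norm v * M"
      using Basis_le_norm[OF e, of v] assms(2)[OF e] by (simp add: mult_mono)
    finally show "\<bar>(v \<bullet> e) * D e\<bar> \<le> norm v * M" .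
  qed
  finally show ?thesis by (simp add: algebra_simps)
qed

lemma lip:
  fixes H :: "'a::euclidean_space \<Rightarrow> real"
  assumes S: "convex S" and d: "\<And>q. q \<in> S \<Longrightarrow> H differentiable at q"
    and b: "\<And>q e. q \<in> S \<Longrightarrow> e \<in> Basis \<Longrightarrow> \<bar>frechet_derivative H (at q) e\<bar> \<le> M"
    and y: "y \<in> S" and z: "z \<in> S"
  shows "\<bar>H y - H z\<bar> \<le> real DIM('a) * M * norm (y - z)"
proof -
  have "norm (H y - H z) \<le> real DIM('a) * M * norm (y - z)"
  proof (rule differentiable_bound[OF S _ _ y z])
    fix x assume x: "x \<in> S"
    show "(H has_derivative frechet_derivative H (at x)) (at x within S)"
      using d[OF x] frechet_derivative_works has_derivative_at_withinI by blast
    have "linear (frechet_derivative H (at x))"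
      using d[OF x] frechet_derivative_works has_derivative_linear by blast
    then show "onorm (frechet_derivative H (at x)) \<le> real DIM('a) * M"
      by (intro onorm_le) (simp add: lin_bound b[OF x])
  qed
  then show ?thesis by simp
qed

lemma vanish:
  fixes G :: "'a::real_normed_vector \<Rightarrow> real"
  assumes U: "open U" and y: "y \<in> U" and d: "G differentiable at y"
    and z: "\<And>t. y + t *\<^sub>R b \<in> U \<Longrightarrow> G (y + t *\<^sub>R b) = 0"
  shows "frechet_derivative G (at y) b = 0"
proof -
  let ?D = "frechet_derivative G (at y)"
  have Gd: "(G has_derivative ?D) (at (y + 0 *\<^sub>R b))"
    using d frechet_derivative_works by (simp, blast)
  have pd: "((\<lambda>t::real. y + t *\<^sub>R b) has_derivative (\<lambda>t. t *\<^sub>R b)) (at 0)"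
    by (auto intro!: derivative_eq_intros)
  have c1: "((\<lambda>t::real. G (y + t *\<^sub>R b)) has_derivative (\<lambda>t. ?D (t *\<^sub>R b))) (at 0)"
    using diff_chain_at[OF pd Gd] by (simp add: o_def)
  have oT: "open {t::real. y + t *\<^sub>R b \<in> U}"
  proof -
    have "{t::real. y + t *\<^sub>R b \<in> U} = (\<lambda>t. y + t *\<^sub>R b) -` U" by auto
    moreover have "continuous_on UNIV (\<lambda>t::real. y + t *\<^sub>R b)" by (intro continuous_intros)
    ultimately show ?thesis using open_vimage[OF U] by metis
  qed
  have c2: "((\<lambda>t::real. G (y + t *\<^sub>R b)) has_derivative (\<lambda>t. 0)) (at 0)"
    by (rule has_derivative_transform_within_open[OF has_derivative_const oT]) (use y z in auto)
  have "(\<lambda>t. ?D (t *\<^sub>R b)) = (\<lambda>t. 0)" using has_derivative_unique[OF c1 c2] .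
  then have "?D (1 *\<^sub>R b) = 0" by metis
  then show ?thesis by simp
qed

lemma vanish_iter:
  fixes F :: "complex ^ 'n::finite \<Rightarrow> real"
  assumes U: "open U"
    and sm: "\<And>bs y. bs\<in>lists Basis \<Longrightarrow> y\<in>U \<Longrightarrow> iter_partial bs F differentiable at y"
    and F0: "\<And>y. y \<in> U \<Longrightarrow> (\<forall>j. j \<noteq> i0 \<longrightarrow> y $ j = 0) \<Longrightarrow> F y = 0"
  shows "bs \<in> lists {b\<in>Basis. \<forall>j. j \<noteq> i0 \<longrightarrow> b $ j = 0} \<Longrightarrow> y \<in> U \<Longrightarrow> (\<forall>j. j \<noteq> i0 \<longrightarrow> y $ j = 0)
     \<Longrightarrow> iter_partial bs F y = 0"
proof (induction bs arbitrary: y)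
  case Nil
  then show ?case using F0 by simp
next
  case (Cons b bs)
  have bsB: "bs \<in> lists Basis" using Cons.prems(1) by auto
  have "frechet_derivative (iter_partial bs F) (at y) b = 0"
  proof (rule vanish[OF U Cons.prems(2) sm[OF bsB Cons.prems(2)]])
    fix t assume "y + t *\<^sub>R b \<in> U"
    then show "iter_partial bs F (y + t *\<^sub>R b) = 0"
      using Cons.prems by (intro Cons.IH) auto
  qed
  then show ?case by (simp add: partial_def)
qed

lemma basis_cvec: "(b::'n::finite cvec) \<in> Basis \<longleftrightarrow> (\<exists>j u. u \<in> {1, \<i>} \<and> b = axis j u)"
  by (auto simp: Basis_vec_def Basis_complex_def)

lemma axis_i0_zero: "u \<in> {1, \<i>} \<Longrightarrow> (axis j u :: 'n::finite cvec) $ i0 = 0 \<longleftrightarrow> j \<noteq> i0"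
  by (auto simp: axis_def)

definition sg :: "'n::finite \<Rightarrow> real \<Rightarrow> 'n cvec \<Rightarrow> real" where
  "sg i0 \<delta> b = (if b $ i0 = 0 then \<delta> else sqrt \<delta>)"
definition tu :: "'n::finite \<Rightarrow> real \<Rightarrow> 'n cvec \<Rightarrow> real" where
  "tu i0 \<delta> b = (if b $ i0 = 0 then 1/\<delta> else 1/sqrt \<delta>)"

lemma lin_Lam_inv: "linear (Lam_inv i0 \<delta>)"
  by (rule linearI) (auto simp: Lam_inv_def vec_eq_iff algebra_simps scaleR_conv_of_real)

lemma Lam_inv_basis: "b \<in> Basis \<Longrightarrow> Lam_inv i0 \<delta> b = sg i0 \<delta> b *\<^sub>R b"
proof -
  assume "b \<in> Basis"
  then obtain j u where u: "u \<in> {1, \<i>}" and b: "b = axis j u" by (auto simp: basis_cvec)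
  have z: "b $ i0 = 0 \<longleftrightarrow> j \<noteq> i0" using u b axis_i0_zero by metis
  show ?thesis unfolding vec_eq_iff
  proof
    fix i
    show "Lam_inv i0 \<delta> b $ i = (sg i0 \<delta> b *\<^sub>R b) $ i"
    proof -
      have "(sg i0 \<delta> b *\<^sub>R b) $ i = complex_of_real (sg i0 \<delta> b) * b $ i"
        by (subst vector_scaleR_component) (simp only: scaleR_conv_of_real)
      then show ?thesis
        using z unfolding b by (cases "i = j") (auto simp: Lam_inv_def sg_def axis_def)
    qed
  qed
qed

lemma inner_div_real: "(z / complex_of_real r) \<bullet> u = (z \<bullet> u) / r"
  by (simp add: inner_complex_def Re_divide_of_real Im_divide_of_real add_divide_distrib)

lemma Lam_inner: "\<delta> > 0 \<Longrightarrow> c \<in> Basis \<Longrightarrow> Lam i0 \<delta> w \<bullet> c = tu i0 \<delta> c * (w \<bullet> c)"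
proof -
  assume d: "\<delta> > 0" and "c \<in> Basis"
  then obtain j u where u: "u \<in> {1, \<i>}" and c: "c = axis j u" by (auto simp: basis_cvec)
  have z: "c $ i0 = 0 \<longleftrightarrow> j \<noteq> i0" using u c axis_i0_zero by metis
  have p: "\<delta> powr (- 1 / 2) = 1 / sqrt \<delta>" using d by (simp add: powr_minus_divide powr_half_sqrt)
  show ?thesis
    using z p unfolding c inner_axis
    by (auto simp: Lam_def tu_def inner_div_real)
qed

lemma Lam_Lam_inv: "\<delta> > 0 \<Longrightarrow> Lam i0 \<delta> (Lam_inv i0 \<delta> x) = x"
  by (auto simp: Lam_def Lam_inv_def vec_eq_iff powr_minus_divide powr_half_sqrt
     simp flip: of_real_mult)

lemma le_sqrt: "0 < (\<delta>::real) \<Longrightarrow> \<delta> \<le> 1 \<Longrightarrow> \<delta> \<le> sqrt \<delta>"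
proof -
  assume d: "0 < \<delta>" "\<delta> \<le> 1"
  have s1: "sqrt \<delta> \<le> 1" using d by simp
  have "\<delta> = sqrt \<delta> * sqrt \<delta>" using d by simp
  also have "\<dots> \<le> sqrt \<delta> * 1" using s1 d by (intro mult_left_mono) auto
  finally show ?thesis by simp
qed

lemma norm_vec_le:
  fixes x y :: "'n::finite cvec"
  assumes "\<And>j. norm (y $ j) \<le> r * norm (x $ j)" "r \<ge> 0"
  shows "norm y \<le> r * norm x"
proof -
  have "norm y = L2_set (\<lambda>j. norm (y $ j)) UNIV" by (simp add: norm_vec_def)
  also have "\<dots> \<le> L2_set (\<lambda>j. r * norm (x $ j)) UNIV"
    by (rule L2_set_mono) (use assms in auto)
  also have "\<dots> = r * norm x" by (simp add: norm_vec_def L2_set_right_distrib[OF assms(2)])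
  finally show ?thesis .
qed

lemma Lam_inv_norm: "0 < \<delta> \<Longrightarrow> \<delta> \<le> 1 \<Longrightarrow> norm (Lam_inv i0 \<delta> x) \<le> sqrt \<delta> * norm x"
proof (rule norm_vec_le)
  fix j assume d: "0 < \<delta>" "\<delta> \<le> 1"
  have "\<delta> \<le> sqrt \<delta>" using d by (rule le_sqrt)
  then show "norm (Lam_inv i0 \<delta> x $ j) \<le> sqrt \<delta> * norm (x $ j)"
    using d by (auto simp: Lam_inv_def norm_mult intro: mult_right_mono)
qed simp

lemma Lam_inv_axis_dist: "0 < \<delta> \<Longrightarrow>
   norm (Lam_inv i0 \<delta> x - axis_emb i0 (Lam_inv i0 \<delta> x $ i0)) \<le> \<delta> * norm x"
  by (rule norm_vec_le) (auto simp: Lam_inv_def axis_emb_def norm_mult)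

lemma Jst_cross: "b \<in> Basis \<Longrightarrow> c \<in> Basis \<Longrightarrow> (b $ i0 = 0) \<noteq> (c $ i0 = 0) \<Longrightarrow> Jst b \<bullet> (c::'n::finite cvec) = 0"
proof -
  assume "b \<in> Basis" "c \<in> Basis" and ne: "(b $ i0 = 0) \<noteq> (c $ i0 = 0)"
  then obtain j1 u j2 v where u: "u \<in> {1, \<i>}" and b: "b = axis j1 u" and v: "v \<in> {1, \<i>}" and c: "c = axis j2 v"
    by (auto simp: basis_cvec)
  have "j1 \<noteq> j2" using ne axis_i0_zero[OF u] axis_i0_zero[OF v] b c by metis
  then show ?thesis unfolding c inner_axis by (simp add: Jst_def b axis_def)
qed

lemma entry_Jdelta:
  assumes d: "0 < \<delta>" and b: "b \<in> Basis" and c: "c \<in> Basis" and l: "linear (J (Lam_inv i0 \<delta> p))"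
  shows "mat_entry (Jdelta i0 J \<delta> p) b c = sg i0 \<delta> b * tu i0 \<delta> c * mat_entry (J (Lam_inv i0 \<delta> p)) b c"
proof -
  have "mat_entry (Jdelta i0 J \<delta> p) b c = tu i0 \<delta> c * (J (Lam_inv i0 \<delta> p) (sg i0 \<delta> b *\<^sub>R b) \<bullet> c)"
    unfolding mat_entry_def Jdelta_def Lam_inner[OF d c] Lam_inv_basis[OF b] ..
  also have "\<dots> = sg i0 \<delta> b * tu i0 \<delta> c * mat_entry (J (Lam_inv i0 \<delta> p)) b c"
    using l by (simp add: linear_scale mat_entry_def)
  finally show ?thesis .
qed

lemma axis_emb_axis: "axis_emb i0 = axis i0"
  by (auto simp: axis_emb_def axis_def fun_eq_iff)

lemma bl_axis: "bounded_linear (axis i0 :: complex \<Rightarrow> 'n::finite cvec)"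
proof -
  have "linear (axis i0 :: complex \<Rightarrow> 'n::finite cvec)"
    by (rule linearI) (auto simp: vec_eq_iff axis_def)
  then show ?thesis by (simp add: linear_conv_bounded_linear)
qed

lemma holo_vanish:
  assumes H: "J_holomorphic_on {\<zeta>. axis_emb i0 \<zeta> \<in> U} J (axis_emb i0)"
    and y: "y \<in> U" "\<forall>j. j \<noteq> i0 \<longrightarrow> y $ j = 0"
    and b: "b \<in> Basis" "b $ i0 \<noteq> 0" and c: "c \<in> Basis" "c $ i0 = 0"
  shows "mat_entry (J y) b c = (0::real)"
proof -
  obtain u where u: "u \<in> {1, \<i>}" and bu: "b = axis i0 u"
  proof -
    obtain j u where "u \<in> {1, \<i>}" "b = axis j u" using b(1) basis_cvec by blast
    moreover have "j = i0" using axis_i0_zero[OF calculation(1)] b(2) calculation(2) by blast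
    ultimately show ?thesis using that by blast
  qed
  obtain j2 v where v: "v \<in> {1, \<i>}" and cv: "c = axis j2 v" and j2: "j2 \<noteq> i0"
  proof -
    obtain j u where "u \<in> {1, \<i>}" "c = axis j u" using c(1) basis_cvec by blast
    moreover have "j \<noteq> i0" using axis_i0_zero[OF calculation(1)] c(2) calculation(2) by blast
    ultimately show ?thesis using that by blast
  qed
  have yax: "axis_emb i0 (y $ i0) = y" using y(2) by (auto simp: axis_emb_def vec_eq_iff)
  have fd: "frechet_derivative (axis_emb i0) (at (y $ i0)) = axis i0"
    unfolding axis_emb_axis by (rule frechet_derivative_at[symmetric]) (rule bounded_linear_imp_has_derivative[OF bl_axis])
  have "J y (axis i0 u) = axis i0 (\<i> * u)"
  proof -
    have "y $ i0 \<in> {\<zeta>. axis_emb i0 \<zeta> \<in> U}" using yax y(1) by simp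
    then have "frechet_derivative (axis_emb i0) (at (y $ i0)) (\<i> * u) =
       J (axis_emb i0 (y $ i0)) (frechet_derivative (axis_emb i0) (at (y $ i0)) u)"
      using H unfolding J_holomorphic_on_def by blast
    then show ?thesis unfolding fd yax by simp
  qed
  then show ?thesis unfolding mat_entry_def bu cv inner_axis using j2 by (simp add: axis_def)
qed

lemma prod_list_le_elem:
  fixes f :: "'a \<Rightarrow> real"
  assumes "\<forall>x\<in>set xs. 0 \<le> f x \<and> f x \<le> 1" "y \<in> set xs"
  shows "prod_list (map f xs) \<le> f y"
  using assms
proof (induction xs)
  case Nil then show ?case by simp
next
  case (Cons a xs)
  have p01: "0 \<le> prod_list (map f xs) \<and> prod_list (map f xs) \<le> 1"
    using Cons.prems(1) by (induction xs) (auto intro: mult_le_one)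
  show ?case
  proof (cases "y = a")
    case True
    then show ?thesis using p01 Cons.prems(1) by (simp add: mult_left_le)
  next
    case False
    then have "prod_list (map f xs) \<le> f y" using Cons by auto
    moreover have "f a * prod_list (map f xs) \<le> prod_list (map f xs)"
      using Cons.prems(1) p01 by (simp add: mult_left_le_one_le)
    ultimately show ?thesis by simp
  qed
qed

lemma prod_list_01:
  fixes f :: "'a \<Rightarrow> real"
  assumes "\<forall>x\<in>set xs. 0 \<le> f x \<and> f x \<le> 1"
  shows "0 \<le> prod_list (map f xs) \<and> prod_list (map f xs) \<le> 1"
  using assms by (induction xs) (auto intro: mult_le_one)

lemma unif_bound:
  fixes f :: "'a \<Rightarrow> 'b \<Rightarrow> real"
  assumes "finite T" "\<And>t. t \<in> T \<Longrightarrow> \<exists>M. \<forall>q\<in>Q. \<bar>f t q\<bar> \<le> M"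
  shows "\<exists>M\<ge>0. \<forall>t\<in>T. \<forall>q\<in>Q. \<bar>f t q\<bar> \<le> M"
  using assms
proof (induction T rule: finite_induct)
  case empty then show ?case by auto
next
  case (insert t T)
  obtain M1 where M1: "M1 \<ge> 0" "\<forall>t\<in>T. \<forall>q\<in>Q. \<bar>f t q\<bar> \<le> M1" using insert by auto
  obtain M2 where M2: "\<forall>q\<in>Q. \<bar>f t q\<bar> \<le> M2" using insert.prems by auto
  show ?case
    by (rule exI[of _ "max M1 M2"]) (use M1 M2 in \<open>auto intro: le_max_iff_disj[THEN iffD2]\<close>)
qed

lemma cont_bound:
  fixes g :: "'a::euclidean_space \<Rightarrow> real"
  assumes "\<And>q. q \<in> cball 0 r \<Longrightarrow> g differentiable at q"
  shows "\<exists>M. \<forall>q\<in>cball 0 r. \<bar>g q\<bar> \<le> M"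
proof -
  have "continuous_on (cball 0 r) g"
    using assms by (meson continuous_at_imp_continuous_on differentiable_imp_continuous_within)
  then have "compact (g ` cball 0 r)" by (intro compact_continuous_image) auto
  then have "bounded (g ` cball 0 r)" by (rule compact_imp_bounded)
  then show ?thesis by (auto simp: bounded_real)
qed

theorem lemma3p2:
  fixes J :: "'n::finite cvec \<Rightarrow> 'n cvec \<Rightarrow> 'n cvec"
    and U :: "'n cvec set" and i0 :: 'n
  assumes "open U" and "0 \<in> U"
    and "almost_complex_on U J"
    and "J 0 = Jst"
    and "J_holomorphic_on {\<zeta>. axis_emb i0 \<zeta> \<in> U} J (axis_emb i0)"
  shows "\<forall>k::nat. k > 0 \<longrightarrow> (\<forall>K. compact K \<longrightarrow>
          (\<forall>\<epsilon>>0. \<exists>d0>0. \<forall>\<delta>. 0 < \<delta> \<and> \<delta> < d0 \<longrightarrow>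
             K \<subseteq> Lam i0 \<delta> ` U \<and>
             (\<forall>bs\<in>lists Basis. length bs \<le> k \<longrightarrow>
               (\<forall>b\<in>Basis. \<forall>c\<in>Basis. \<forall>x\<in>K.
                 \<bar>iter_partial bs (\<lambda>p. mat_entry (Jdelta i0 J \<delta> p) b c - mat_entry Jst b c) x\<bar> \<le> \<epsilon>))))"
proof (intro allI impI)
  fix k :: nat and K :: "'n cvec set" and \<epsilon> :: real
  assume "0 < k" and cK: "compact K" and e: "0 < \<epsilon>"
  note U = assms(1)
  define F where "F b c = (\<lambda>q. mat_entry (J q) b c)" for b c
  have lin: "\<And>q. q \<in> U \<Longrightarrow> linear (J q)" using assms(3) by (simp add: almost_complex_on_def)
  have sm: "\<And>b c bs y. b \<in> Basis \<Longrightarrow> c \<in> Basis \<Longrightarrow> bs\<in>lists Basis \<Longrightarrow> y\<in>U \<Longrightarrow>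
      iter_partial bs (F b c) differentiable at y"
    using assms(3) by (simp add: almost_complex_on_def smooth_on_def F_def)
  obtain r where r: "r > 0" "cball 0 r \<subseteq> U" using U assms(2) open_contains_cball by blast
  define T where "T = {bs. set bs \<subseteq> (Basis::'n cvec set) \<and> length bs \<le> Suc k} \<times> (Basis::'n cvec set) \<times> (Basis::'n cvec set)"
  have fT: "finite T" unfolding T_def by (intro finite_cartesian_product finite_lists_length_le) auto
  obtain M where M0: "M \<ge> 0" and M: "\<forall>t\<in>T. \<forall>q\<in>cball 0 r. \<bar>(\<lambda>t. iter_partial (fst t) (F (fst (snd t)) (snd (snd t)))) t q\<bar> \<le> M"
  proof -
    have "\<exists>M\<ge>0. \<forall>t\<in>T. \<forall>q\<in>cball 0 r. \<bar>(\<lambda>t. iter_partial (fst t) (F (fst (snd t)) (snd (snd t)))) t q\<bar> \<le> M"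
    proof (rule unif_bound[OF fT])
      fix t assume "t \<in> T"
      then show "\<exists>M. \<forall>q\<in>cball 0 r. \<bar>(\<lambda>t. iter_partial (fst t) (F (fst (snd t)) (snd (snd t)))) t q\<bar> \<le> M"
        using r by (intro cont_bound) (auto simp: T_def intro!: sm)
    qed
    then show ?thesis using that by blast
  qed
  have Mb: "\<bar>iter_partial bs (F b c) q\<bar> \<le> M" if "bs \<in> lists Basis" "length bs \<le> Suc k" "b \<in> Basis" "c \<in> Basis" "q \<in> cball 0 r" for bs b c q
    using M that unfolding T_def by force
  define B where "B = real DIM('n cvec) * M"
  have B0: "B \<ge> 0" using M0 by (simp add: B_def)
  have Lip: "\<bar>iter_partial bs (F b c) y - iter_partial bs (F b c) z\<bar> \<le> B * norm (y - z)"
    if "bs \<in> lists Basis" "length bs \<le> k" "b \<in> Basis" "c \<in> Basis" "y \<in> cball 0 r" "z \<in> cball 0 r" for bs b c y z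
    unfolding B_def
  proof (rule lip[OF convex_cball _ _ that(5,6)])
    fix q :: "'n cvec" assume "q \<in> cball 0 r"
    then show "iter_partial bs (F b c) differentiable at q" using sm that r by blast
    fix e assume "e \<in> (Basis::'n cvec set)"
    then show "\<bar>frechet_derivative (iter_partial bs (F b c)) (at q) e\<bar> \<le> M"
      using Mb[of "e # bs" b c q] that \<open>q \<in> cball 0 r\<close> by (simp add: partial_def)
  qed
  obtain R0 where R0: "\<forall>x\<in>K. norm x \<le> R0" using compact_imp_bounded[OF cK] bounded_iff by blast
  define R where "R = max R0 0"
  have R: "\<And>x. x \<in> K \<Longrightarrow> norm x \<le> R" "R \<ge> 0" using R0 by (auto simp: R_def)
  define C where "C = M + B * R"
  have C0: "C \<ge> 0" using M0 B0 R by (simp add: C_def)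
  define d0 where "d0 = min 1 (min ((\<epsilon> / (C + 1))^2) ((r / (R + 1))^2))"
  show "\<exists>d0>0. \<forall>\<delta>. 0 < \<delta> \<and> \<delta> < d0 \<longrightarrow>
             K \<subseteq> Lam i0 \<delta> ` U \<and>
             (\<forall>bs\<in>lists Basis. length bs \<le> k \<longrightarrow>
               (\<forall>b\<in>Basis. \<forall>c\<in>Basis. \<forall>x\<in>K.
                 \<bar>iter_partial bs (\<lambda>p. mat_entry (Jdelta i0 J \<delta> p) b c - mat_entry Jst b c) x\<bar> \<le> \<epsilon>))"
  proof (intro exI[of _ d0] conjI allI impI)
    show "d0 > 0" using e r C0 R by (simp add: d0_def)
    fix \<delta> :: real assume d: "0 < \<delta> \<and> \<delta> < d0"
    then have d1: "\<delta> < 1" and dpos: "0 < \<delta>" by (auto simp: d0_def)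
    have sq1: "sqrt \<delta> < \<epsilon> / (C + 1)"
    proof -
      have "sqrt \<delta> < sqrt ((\<epsilon> / (C + 1))^2)" using d by (intro real_sqrt_less_mono) (simp add: d0_def)
      then show ?thesis using C0 e by simp
    qed
    have sq2: "sqrt \<delta> < r / (R + 1)"
    proof -
      have "sqrt \<delta> < sqrt ((r / (R + 1))^2)" using d by (intro real_sqrt_less_mono) (simp add: d0_def)
      then show ?thesis using R r by simp
    qed
    have sqC: "sqrt \<delta> * C \<le> \<epsilon>"
    proof -
      have "sqrt \<delta> * C \<le> sqrt \<delta> * (C + 1)" using dpos by (simp add: algebra_simps)
      also have "\<dots> \<le> \<epsilon>" using sq1 C0 by (simp add: pos_less_divide_eq less_imp_le)
      finally show ?thesis .
    qed
    have sqR: "sqrt \<delta> * R \<le> r"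
    proof -
      have "sqrt \<delta> * R \<le> sqrt \<delta> * (R + 1)" using dpos by (simp add: algebra_simps)
      also have "\<dots> \<le> r" using sq2 R by (simp add: pos_less_divide_eq less_imp_le)
      finally show ?thesis .
    qed
    have ds: "\<delta> \<le> sqrt \<delta>" "sqrt \<delta> \<le> 1" "0 < sqrt \<delta>" using le_sqrt dpos d1 by auto
    let ?L = "Lam_inv i0 \<delta>"
    have Lx: "?L x \<in> cball 0 r" if "x \<in> K" for x
    proof -
      have "norm (?L x) \<le> sqrt \<delta> * norm x" using Lam_inv_norm[OF dpos] d1 by simp
      also have "\<dots> \<le> sqrt \<delta> * R" using R that ds by (simp add: mult_left_mono)
      finally show ?thesis using sqR by simp
    qed
    show "K \<subseteq> Lam i0 \<delta> ` U"
    proof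
      fix x assume "x \<in> K"
      then have "x = Lam i0 \<delta> (?L x)" "?L x \<in> U" using Lam_Lam_inv[OF dpos, of i0 x] Lx r by auto
      then show "x \<in> Lam i0 \<delta> ` U" by blast
    qed
    show "\<forall>bs\<in>lists Basis. length bs \<le> k \<longrightarrow>
               (\<forall>b\<in>Basis. \<forall>c\<in>Basis. \<forall>x\<in>K.
                 \<bar>iter_partial bs (\<lambda>p. mat_entry (Jdelta i0 J \<delta> p) b c - mat_entry Jst b c) x\<bar> \<le> \<epsilon>)"
    proof (intro ballI impI)
      fix bs :: "'n cvec list" and b c x :: "'n cvec" assume bs: "bs \<in> lists Basis" and kbs: "length bs \<le> k" and b: "b \<in> Basis" and c: "c \<in> Basis" and x: "x \<in> K"
      define a where "a = sg i0 \<delta> b * tu i0 \<delta> c"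
      define \<kappa> where "\<kappa> = mat_entry Jst b c"
      define P where "P = prod_list (map (sg i0 \<delta>) bs)"
      define D where "D = iter_partial bs (F b c)"
      have lL: "linear ?L" by (rule lin_Lam_inv)
      have oO: "open (?L -` U)"
        using open_vimage[OF U] lL linear_continuous_on linear_conv_bounded_linear by blast
      have xO: "x \<in> ?L -` U" using Lx[OF x] r by auto
      have "iter_partial bs (\<lambda>p. mat_entry (Jdelta i0 J \<delta> p) b c - mat_entry Jst b c) x
          = iter_partial bs (\<lambda>q. a * F b c (?L q) - \<kappa>) x"
        by (rule ip_local[OF oO xO]) (auto simp: a_def \<kappa>_def F_def entry_Jdelta[OF dpos b c] lin)
      also have "\<dots> = a * P * D (?L x) - (if bs = [] then \<kappa> else 0)"
        unfolding P_def D_def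
        by (rule ip_chain[OF lL Lam_inv_basis U _ bs]) (use sm b c xO in auto)
      finally have val: "iter_partial bs (\<lambda>p. mat_entry (Jdelta i0 J \<delta> p) b c - mat_entry Jst b c) x
          = a * P * D (?L x) - (if bs = [] then \<kappa> else 0)" .
      have sg01: "\<forall>y\<in>set bs. 0 \<le> sg i0 \<delta> y \<and> sg i0 \<delta> y \<le> 1" using ds dpos by (auto simp: sg_def)
      have P01: "0 \<le> P" "P \<le> 1" using prod_list_01[OF sg01] by (auto simp: P_def)
      have Pne: "P \<le> sqrt \<delta>" if "bs \<noteq> []"
      proof -
        obtain y where "y \<in> set bs" using \<open>bs \<noteq> []\<close> by (meson list.set_sel(1))
        then have "P \<le> sg i0 \<delta> y" unfolding P_def by (rule prod_list_le_elem[OF sg01])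
        then show ?thesis using ds by (auto simp: sg_def split: if_splits)
      qed
      have Pz: "P \<le> \<delta>" if "y \<in> set bs" "y $ i0 = 0" for y
      proof -
        have "P \<le> sg i0 \<delta> y" unfolding P_def using that(1) by (rule prod_list_le_elem[OF sg01])
        then show ?thesis using that by (auto simp: sg_def)
      qed
      have DM: "\<bar>D (?L x)\<bar> \<le> M" unfolding D_def using Mb[OF bs _ b c Lx[OF x]] kbs by simp
      have F0: "F b c 0 = \<kappa>" by (simp add: F_def \<kappa>_def assms(4))
      have sqD: "sqrt \<delta> * sqrt \<delta> = \<delta>" using dpos by simp
      show "\<bar>iter_partial bs (\<lambda>p. mat_entry (Jdelta i0 J \<delta> p) b c - mat_entry Jst b c) x\<bar> \<le> \<epsilon>"
        unfolding val
      proof (cases "b $ i0 \<noteq> 0 \<and> c $ i0 = 0")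
        case False
        have a01: "0 \<le> a" "a \<le> 1" using False ds dpos by (auto simp: a_def sg_def tu_def)
        show "\<bar>a * P * D (?L x) - (if bs = [] then \<kappa> else 0)\<bar> \<le> \<epsilon>"
        proof (cases "bs = []")
          case False
          have "\<bar>a * P * D (?L x)\<bar> = a * P * \<bar>D (?L x)\<bar>" using a01 P01 by (simp add: abs_mult)
          also have "\<dots> \<le> 1 * sqrt \<delta> * M"
            using a01 P01 Pne[OF False] DM dpos by (intro mult_mono) auto
          also have "\<dots> \<le> sqrt \<delta> * C" using B0 R ds by (simp add: C_def)
          finally show ?thesis using False sqC by simp
        next
          case True
          then have P1: "P = 1" by (simp add: P_def)
          have DF: "D = F b c" using True by (simp add: D_def)
          show ?thesis
          proof (cases "a = 1")
            case True
            have "\<bar>F b c (?L x) - F b c 0\<bar> \<le> B * norm (?L x - 0)"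
              using Lip[of "[]" b c "?L x" 0] b c Lx[OF x] r by simp
            also have "\<dots> \<le> B * (sqrt \<delta> * R)"
            proof -
              have "norm (?L x) \<le> sqrt \<delta> * norm x" using Lam_inv_norm[OF dpos] d1 by simp
              also have "\<dots> \<le> sqrt \<delta> * R" using R x ds by (simp add: mult_left_mono)
              finally show ?thesis using B0 by (simp add: mult_left_mono)
            qed
            also have "\<dots> \<le> sqrt \<delta> * C" using M0 ds by (simp add: C_def algebra_simps)
            finally show ?thesis using True P1 DF F0 \<open>bs = []\<close> sqC by simp
          next
            case False
            then have "b $ i0 = 0" "c $ i0 \<noteq> 0" "a = sqrt \<delta>"
              using \<open>\<not> (b $ i0 \<noteq> 0 \<and> c $ i0 = 0)\<close> dpos sqD
              by (auto simp: a_def sg_def tu_def real_div_sqrt split: if_splits)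
            then have k0: "\<kappa> = 0" using Jst_cross[OF b c] by (auto simp: \<kappa>_def mat_entry_def)
            have "\<bar>a * P * D (?L x)\<bar> \<le> sqrt \<delta> * 1 * M"
              using \<open>a = sqrt \<delta>\<close> P1 DM ds by (simp add: abs_mult mult_left_mono)
            also have "\<dots> \<le> sqrt \<delta> * C" using B0 R ds by (simp add: C_def)
            finally show ?thesis using k0 sqC by simp
          qed
        qed
      next
        case True
        then have a: "a = 1 / sqrt \<delta>" using dpos sqD by (auto simp: a_def sg_def tu_def field_simps)
        have k0: "\<kappa> = 0" using Jst_cross[OF b c] True by (auto simp: \<kappa>_def mat_entry_def)
        show "\<bar>a * P * D (?L x) - (if bs = [] then \<kappa> else 0)\<bar> \<le> \<epsilon>"
        proof (cases "\<exists>y\<in>set bs. y $ i0 = 0")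
          case True
          then obtain y where "y \<in> set bs" "y $ i0 = 0" by blast
          then have Pd: "P \<le> \<delta>" by (rule Pz)
          have "\<bar>a * P * D (?L x)\<bar> = a * P * \<bar>D (?L x)\<bar>" using a ds P01 by (simp add: abs_mult)
          also have "\<dots> \<le> (1 / sqrt \<delta>) * \<delta> * M"
            using a ds P01 Pd DM by (intro mult_mono) auto
          also have "\<dots> = sqrt \<delta> * M" using sqD ds by (simp add: field_simps)
          also have "\<dots> \<le> sqrt \<delta> * C" using B0 R ds by (simp add: C_def)
          finally show ?thesis using k0 sqC by simp
        next
          case False
          have bsA: "bs \<in> lists {b\<in>Basis. \<forall>j. j \<noteq> i0 \<longrightarrow> b $ j = 0}"
          proof -
            have "y \<in> {b\<in>Basis. \<forall>j. j \<noteq> i0 \<longrightarrow> b $ j = 0}" if "y \<in> set bs" for y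
            proof -
              have yB: "y \<in> Basis" "y $ i0 \<noteq> 0" using that bs False by auto
              then obtain j u where "u \<in> {1, \<i>}" "y = axis j u" by (auto simp: basis_cvec)
              moreover have "j = i0" using axis_i0_zero[OF calculation(1)] yB calculation(2) by blast
              ultimately show ?thesis using yB by (auto simp: axis_def)
            qed
            then show ?thesis by auto
          qed
          define y0 where "y0 = axis_emb i0 (?L x $ i0)"
          have y0ax: "\<forall>j. j \<noteq> i0 \<longrightarrow> y0 $ j = 0" by (simp add: y0_def axis_emb_def)
          have "norm y0 \<le> 1 * norm (?L x)"
            unfolding y0_def by (rule norm_vec_le) (auto simp: axis_emb_def)
          then have y0c: "y0 \<in> cball 0 r" using Lx[OF x] by simp
          have Dy0: "D y0 = 0"
            unfolding D_def
          proof (rule vanish_iter[OF U _ _ bsA _ y0ax])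
            show "\<And>bs y. bs \<in> lists Basis \<Longrightarrow> y \<in> U \<Longrightarrow> iter_partial bs (F b c) differentiable at y"
              using sm b c by blast
            show "\<And>y. y \<in> U \<Longrightarrow> \<forall>j. j \<noteq> i0 \<longrightarrow> y $ j = 0 \<Longrightarrow> F b c y = 0"
              unfolding F_def using holo_vanish[OF assms(5)] b c True by blast
            show "y0 \<in> U" using y0c r by auto
          qed
          have "\<bar>D (?L x)\<bar> = \<bar>D (?L x) - D y0\<bar>" using Dy0 by simp
          also have "\<dots> \<le> B * norm (?L x - y0)"
            unfolding D_def by (rule Lip[OF bs kbs b c Lx[OF x] y0c])
          also have "\<dots> \<le> B * (\<delta> * R)"
          proof -
            have "norm (?L x - y0) \<le> \<delta> * norm x" unfolding y0_def by (rule Lam_inv_axis_dist[OF dpos])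
            also have "\<dots> \<le> \<delta> * R" using R x dpos by (simp add: mult_left_mono)
            finally show ?thesis using B0 by (simp add: mult_left_mono)
          qed
          finally have DL: "\<bar>D (?L x)\<bar> \<le> B * (\<delta> * R)" .
          have "\<bar>a * P * D (?L x)\<bar> = a * P * \<bar>D (?L x)\<bar>" using a ds P01 by (simp add: abs_mult)
          also have "\<dots> \<le> (1 / sqrt \<delta>) * 1 * (B * (\<delta> * R))"
            using a ds P01 DL by (intro mult_mono) auto
          also have "\<dots> = sqrt \<delta> * (B * R)" using sqD ds by (simp add: field_simps)
          also have "\<dots> \<le> sqrt \<delta> * C" using M0 ds by (simp add: C_def)
          finally show ?thesis using k0 sqC by simp
        qed
      qed
    qed
  qed
qed

end
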